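(* There is a constant $C>0$, independent of the mesh, such that every solution $u_h\in V_h$ of the scheme satisfies $\|u_h\|_{L^\infty(\overline\Omega)}\le C$. Furthermore, let $p\in\mathbb R^d$, let $M\ge \|f\|_{L^\infty(\Omega)}\max_{B\in\mathbb S_1}\sqrt[d]{\det B}=\|f\|_{L^\infty(\Omega)}/d$, and let $\zeta(x)=\frac M2|x-p|^2$. Then, for every mesh, $u_h-I_h\zeta$ attains its minimum over $\overline\Omega$ at a boundary node and $u_h+I_h\zeta$ attains its maximum over $\overline\Omega$ at a boundary node.
   Context: Standing setting: $d\ge2$, $\Omega\subset\mathbb R^d$ a bounded open strictly convex domain, $f:\Omega\to[0,\infty)$ bounded and continuous, $g:\partial\Omega\to\mathbb R$ bounded and continuous. $\mathbb S$: real symmetric $d\times d$ matrices; $\mathbb S_+$: positive semidefinite ones; $\mathbb S_1=\{B\in\mathbb S_+:\operatorname{tr}B=1\}$; $|\cdot|$ is the Euclidean norm. Mesh: $\mathcal T_h$ is a shape-regular simplicial partition whose union $\Omega_h$ satisfies $\Omega_h\subset\Omega$; its nodes are $\mathcal N_h=\mathcal N_h^I\cup\mathcal N_h^B$, where the boundary nodes $\mathcal N_h^B$ (nodes on $\partial\Omega_h$) lie on $\partial\Omega$ and $\mathcal N_h^I$ are the interior nodes. $V_h$ is the space of continuous piecewise linear functions on $\mathcal T_h$ and $I_h$ the nodal interpolant onto $V_h$; functions on $\Omega_h$ (in particular elements of $V_h$) are extended to $\overline\Omega$ by being constant along the outer normal directions of $\partial\Omega_h$. $B(\overline\Omega)$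 denotes the bounded real functions on $\overline\Omega$. Controls: $\mathbf F\subset\mathbb R^{d\times d}\times\{\text{diagonal }d\times d\text{ matrices}\}$ is compact, the map $(\sigma,\lambda)\mapsto\sigma\lambda\sigma^T$ is a bijection from $\mathbf F$ onto $\mathbb S_1$, and every $\lambda$ occurring in $\mathbf F$ has nonnegative diagonal entries and the same trace $C>0$. For $B\in\mathbb S_1$, $(\sigma(B),\lambda(B))$ denotes its preimage; $\sigma_j$ is the $j$th column of $\sigma$ and $\lambda_j$ the $j$th diagonal entry of $\lambda$. Stencil size: $k=k(h,x)>0$ is such that $x\pm k(h,x)\sigma_j\in\overline\Omega_h$ for every $x\in\Omega_h$ and every column $\sigma_j$ of every $\sigma$ with $(\sigma,\lambda)\in\mathbf F$. Scheme: for $B\in\mathbb S_1$, $s\in\mathbb R$, $\phi\in B(\overline\Omega)$, with $(\sigma,\lambda)=(\sigma(B),\lambda(B))$ and $k=k(h,x_i)$, set $L_h^B(s,\phi)(x_i)=-\sum_{j=1}^d\lambda_j\frac{\phi(x_i-k\sigma_j)-2s+\phi(x_i+k\sigma_j)}{k^2}+f(x_i)\sqrt[d]{\det B}$ for $x_i\in\mathcal N_h^I$, and $L_h^B(s,\phi)(x_i)=s-g(x_i)$ for $x_i\in\mathcal N_h^B$; $H_h(s,\phi)(x_i)=\sup_{B\in\mathbb S_1}L_h^B(s,\phi)(x_i)$. The discrete solution $u_h\in V_h$ is the (unique) function with $H_h(u_h(x_i),u_h)(x_i)=0$ for all $x_i\in\mathcal N_h$. *)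

theory Defs
  imports "HOL-Analysis.Analysis"
begin

definition strictly_convex_domain :: "(real^'n) set \<Rightarrow> bool" where
  "strictly_convex_domain \<Omega> \<longleftrightarrow> convex \<Omega> \<and>
     (\<forall>x\<in>closure \<Omega>. \<forall>y\<in>closure \<Omega>. x \<noteq> y \<longrightarrow> open_segment x y \<subseteq> \<Omega>)"

definition symmetric_matrix :: "real^'n^'n \<Rightarrow> bool" where
  "symmetric_matrix B \<longleftrightarrow> transpose B = B"

definition psd_matrix :: "real^'n^'n \<Rightarrow> bool" where
  "psd_matrix B \<longleftrightarrow> symmetric_matrix B \<and> (\<forall>x. 0 \<le> x \<bullet> (B *v x))"

definition S1 :: "(real^'n^'n) set" where
  "S1 = {B. psd_matrix B \<and> trace B = 1}"

definition diagonal_matrix :: "real^'n^'n \<Rightarrow> bool" where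
  "diagonal_matrix L \<longleftrightarrow> (\<forall>i j. i \<noteq> j \<longrightarrow> L $ i $ j = 0)"

definition ctrl_map :: "(real^'n^'n) \<times> (real^'n^'n) \<Rightarrow> real^'n^'n" where
  "ctrl_map = (\<lambda>(s, l). s ** l ** transpose s)"

definition admissible_controls :: "((real^'n^'n) \<times> (real^'n^'n)) set \<Rightarrow> real \<Rightarrow> bool" where
  "admissible_controls F c \<longleftrightarrow> compact F \<and> 0 < c \<and>
     bij_betw ctrl_map F S1 \<and>
     (\<forall>(s, l)\<in>F. diagonal_matrix l \<and> (\<forall>i. 0 \<le> l $ i $ i) \<and> trace l = c)"

definition ctrl_of :: "((real^'n^'n) \<times> (real^'n^'n)) set \<Rightarrow> real^'n^'n \<Rightarrow> (real^'n^'n) \<times> (real^'n^'n)" where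
  "ctrl_of F B = the_inv_into F ctrl_map B"

text \<open>A mesh is a finite set of simplices, each given by its set of vertices.\<close>
type_synonym ('n) mesh = "(real^'n) set set"

definition mesh_union :: "('n::finite) mesh \<Rightarrow> (real^'n) set" where
  "mesh_union T = (\<Union>S\<in>T. convex hull S)"

definition Omega_h :: "('n::finite) mesh \<Rightarrow> (real^'n) set" where
  "Omega_h T = interior (mesh_union T)"

definition nodes :: "('n::finite) mesh \<Rightarrow> (real^'n) set" where
  "nodes T = \<Union>T"

definition bnodes :: "('n::finite) mesh \<Rightarrow> (real^'n) set" where
  "bnodes T = nodes T \<inter> frontier (Omega_h T)"

definition inodes :: "('n::finite) mesh \<Rightarrow> (real^'n) set" where
  "inodes T = nodes T - bnodes T"

definition simplicial_mesh :: "('n::finite) mesh \<Rightarrow> bool" where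
  "simplicial_mesh T \<longleftrightarrow> finite T \<and> T \<noteq> {} \<and>
     (\<forall>S\<in>T. finite S \<and> card S = CARD('n) + 1 \<and> \<not> affine_dependent S) \<and>
     (\<forall>S\<in>T. \<forall>S'\<in>T. convex hull S \<inter> convex hull S' = convex hull (S \<inter> S'))"

definition inradius :: "(real^'n) set \<Rightarrow> real" where
  "inradius K = Sup {r. 0 \<le> r \<and> (\<exists>c. ball c r \<subseteq> K)}"

definition shape_regular :: "real \<Rightarrow> ('n::finite) mesh \<Rightarrow> bool" where
  "shape_regular \<kappa> T \<longleftrightarrow> (\<forall>S\<in>T. diameter (convex hull S) \<le> \<kappa> * inradius (convex hull S))"

definition Vh :: "('n::finite) mesh \<Rightarrow> (real^'n \<Rightarrow> real) set" where
  "Vh T = {v. continuous_on (mesh_union T) v \<and>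
     (\<forall>S\<in>T. \<exists>a b. \<forall>x\<in>convex hull S. v x = a \<bullet> x + b) \<and>
     (\<forall>x. x \<notin> mesh_union T \<longrightarrow> v x = 0)}"

definition Ih :: "('n::finite) mesh \<Rightarrow> (real^'n \<Rightarrow> real) \<Rightarrow> (real^'n \<Rightarrow> real)" where
  "Ih T \<phi> = (THE v. v \<in> Vh T \<and> (\<forall>x\<in>nodes T. v x = \<phi> x))"

text \<open>Extension of a function on \<open>closure \<Omega>\<^sub>h\<close> to the whole space, constant along
  outer normal directions: the value at a point outside is the value at a nearest
  point of \<open>closure \<Omega>\<^sub>h\<close>.\<close>
definition ext :: "('n::finite) mesh \<Rightarrow> (real^'n \<Rightarrow> real) \<Rightarrow> (real^'n \<Rightarrow> real)" where
  "ext T v x = (if x \<in> mesh_union T then v x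
     else v (SOME y. y \<in> mesh_union T \<and> dist x y = infdist x (mesh_union T)))"

definition Lh :: "((real^'n^'n) \<times> (real^'n^'n)) set \<Rightarrow> (real^'n \<Rightarrow> real) \<Rightarrow> (real^'n \<Rightarrow> real)
    \<Rightarrow> ('n::finite) mesh \<Rightarrow> (real^'n \<Rightarrow> real) \<Rightarrow> real^'n^'n \<Rightarrow> real \<Rightarrow> (real^'n \<Rightarrow> real) \<Rightarrow> real^'n \<Rightarrow> real" where
  "Lh F f g T k B s \<phi> x =
     (if x \<in> inodes T then
        (let (sg, lm) = ctrl_of F B; kk = k x in
          - (\<Sum>j\<in>UNIV. lm $ j $ j *
               (\<phi> (x - kk *\<^sub>R column j sg) - 2 * s + \<phi> (x + kk *\<^sub>R column j sg)) / kk\<^sup>2)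
          + f x * root CARD('n) (det B))
      else s - g x)"

definition Hh :: "((real^'n^'n) \<times> (real^'n^'n)) set \<Rightarrow> (real^'n \<Rightarrow> real) \<Rightarrow> (real^'n \<Rightarrow> real)
    \<Rightarrow> ('n::finite) mesh \<Rightarrow> (real^'n \<Rightarrow> real) \<Rightarrow> real \<Rightarrow> (real^'n \<Rightarrow> real) \<Rightarrow> real^'n \<Rightarrow> real" where
  "Hh F f g T k s \<phi> x = (SUP B\<in>S1. Lh F f g T k B s \<phi> x)"

definition admissible_k :: "((real^'n^'n) \<times> (real^'n^'n)) set \<Rightarrow> ('n::finite) mesh \<Rightarrow> (real^'n \<Rightarrow> real) \<Rightarrow> bool" where
  "admissible_k F T k \<longleftrightarrow> (\<forall>x\<in>Omega_h T. 0 < k x \<and>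
     (\<forall>(sg, lm)\<in>F. \<forall>j. x + k x *\<^sub>R column j sg \<in> closure (Omega_h T) \<and>
                         x - k x *\<^sub>R column j sg \<in> closure (Omega_h T)))"

definition admissible_mesh :: "(real^'n) set \<Rightarrow> real \<Rightarrow> ('n::finite) mesh \<Rightarrow> bool" where
  "admissible_mesh \<Omega> \<kappa> T \<longleftrightarrow> simplicial_mesh T \<and> shape_regular \<kappa> T \<and>
     Omega_h T \<subseteq> \<Omega> \<and> bnodes T \<subseteq> frontier \<Omega>"

definition discrete_solution :: "((real^'n^'n) \<times> (real^'n^'n)) set \<Rightarrow> (real^'n \<Rightarrow> real) \<Rightarrow> (real^'n \<Rightarrow> real)
    \<Rightarrow> ('n::finite) mesh \<Rightarrow> (real^'n \<Rightarrow> real) \<Rightarrow> (real^'n \<Rightarrow> real) \<Rightarrow> bool" where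
  "discrete_solution F f g T k u \<longleftrightarrow> u \<in> Vh T \<and>
     (\<forall>x\<in>nodes T. Hh F f g T k (u x) (ext T u) x = 0)"

end

theory Submission
  imports Defs
begin


lemma mesh_union_cases:
  "x \<in> mesh_union T \<Longrightarrow> \<exists>S\<in>T. x \<in> convex hull S"
  by (auto simp: mesh_union_def)

lemma hull_sub_mesh_union: "S \<in> T \<Longrightarrow> convex hull S \<subseteq> mesh_union T"
  by (auto simp: mesh_union_def)

lemma nodes_sub_mesh_union: "nodes T \<subseteq> mesh_union T"
  by (auto simp: nodes_def mesh_union_def dest: hull_subset[THEN subsetD])

lemma compact_mesh_union:
  assumes "simplicial_mesh T" shows "compact (mesh_union T)"
  unfolding mesh_union_def
  using assms by (intro compact_UN) (auto simp: simplicial_mesh_def intro: compact_convex_hull[OF finite_imp_compact])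

lemma finite_nodes: "simplicial_mesh T \<Longrightarrow> finite (nodes T)"
  by (auto simp: simplicial_mesh_def nodes_def)

lemma nodes_ne: "simplicial_mesh T \<Longrightarrow> nodes T \<noteq> {}"
  apply (auto simp: simplicial_mesh_def nodes_def)
  by (metis card.empty ex_in_conv nat.simps(3))

lemma mesh_union_sub_closure:
  fixes T :: "('n::finite) mesh"
  assumes "simplicial_mesh T" shows "mesh_union T \<subseteq> closure (Omega_h T)"
proof
  fix x assume "x \<in> mesh_union T"
  then obtain S where S: "S \<in> T" "x \<in> convex hull S" by (auto simp: mesh_union_def)
  have fin: "finite S" "card S = Suc DIM(real^'n)" "\<not> affine_dependent S"
    using assms S by (auto simp: simplicial_mesh_def)
  have ne: "interior (convex hull S) \<noteq> {}"
    using interior_convex_hull_eq_empty[OF fin(2)] fin(3) by simp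
  have "closure (interior (convex hull S)) = convex hull S"
    using convex_closure_interior[OF convex_convex_hull ne] fin(1)
    by (simp add: closure_closed compact_imp_closed compact_convex_hull finite_imp_compact)
  moreover have "interior (convex hull S) \<subseteq> Omega_h T"
    unfolding Omega_h_def by (intro interior_mono hull_sub_mesh_union S)
  ultimately show "x \<in> closure (Omega_h T)"
    using S(2) closure_mono by blast
qed

lemma closure_Omega_h_sub:
  assumes "simplicial_mesh T" shows "closure (Omega_h T) \<subseteq> mesh_union T"
  unfolding Omega_h_def
  by (meson assms closure_minimal compact_imp_closed compact_mesh_union interior_subset order_trans)

lemma inodes_in_Omega_h:
  assumes "simplicial_mesh T" "x \<in> inodes T" shows "x \<in> Omega_h T"
proof -
  have "x \<in> nodes T" "x \<notin> frontier (Omega_h T)" using assms(2) by (auto simp: inodes_def bnodes_def)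
  moreover have "x \<in> closure (Omega_h T)"
    using \<open>x \<in> nodes T\<close> nodes_sub_mesh_union mesh_union_sub_closure[OF assms(1)] by blast
  ultimately show ?thesis by (simp add: frontier_def Omega_h_def)
qed

lemma Vh_comb:
  assumes "v \<in> Vh T" "S \<in> T" "finite S" "\<forall>s\<in>S. 0 \<le> \<mu> s" "sum \<mu> S = 1"
  shows "v (\<Sum>s\<in>S. \<mu> s *\<^sub>R s) = (\<Sum>s\<in>S. \<mu> s * v s)"
proof -
  obtain a b where ab: "\<forall>x\<in>convex hull S. v x = a \<bullet> x + b"
    using assms(1,2) unfolding Vh_def by blast
  have mem: "(\<Sum>s\<in>S. \<mu> s *\<^sub>R s) \<in> convex hull S"
    using assms(3-5) unfolding convex_hull_finite[OF assms(3)] by blast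
  have "v (\<Sum>s\<in>S. \<mu> s *\<^sub>R s) = a \<bullet> (\<Sum>s\<in>S. \<mu> s *\<^sub>R s) + b" using ab mem by blast
  also have "\<dots> = (\<Sum>s\<in>S. \<mu> s * (a \<bullet> s)) + (\<Sum>s\<in>S. \<mu> s) * b"
    using assms(5) by (simp add: inner_sum_right)
  also have "\<dots> = (\<Sum>s\<in>S. \<mu> s * (a \<bullet> s + b))"
    by (simp add: distrib_left sum.distrib sum_distrib_right)
  also have "\<dots> = (\<Sum>s\<in>S. \<mu> s * v s)"
    using ab hull_subset[of S convex] by (intro sum.cong) auto
  finally show ?thesis .
qed

lemma Vh_lin: assumes "u \<in> Vh T" "v \<in> Vh T" shows "(\<lambda>x. \<alpha> * u x + \<beta> * v x) \<in> Vh T"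
proof -
  have A: "\<exists>a b. \<forall>x\<in>convex hull S. \<alpha> * u x + \<beta> * v x = a \<bullet> x + b" if S: "S \<in> T" for S
  proof -
    obtain a b where ab: "\<forall>x\<in>convex hull S. u x = a \<bullet> x + b" using assms(1) S unfolding Vh_def by blast
    obtain a' b' where ab': "\<forall>x\<in>convex hull S. v x = a' \<bullet> x + b'" using assms(2) S unfolding Vh_def by blast
    have "\<forall>x\<in>convex hull S. \<alpha> * u x + \<beta> * v x = (\<alpha> *\<^sub>R a + \<beta> *\<^sub>R a') \<bullet> x + (\<alpha> * b + \<beta> * b')"
    proof
      fix x assume "x \<in> convex hull S"
      then have "\<alpha> * u x + \<beta> * v x = \<alpha> * (a \<bullet> x + b) + \<beta> * (a' \<bullet> x + b')" using ab ab' by simp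
      also have "\<dots> = (\<alpha> *\<^sub>R a + \<beta> *\<^sub>R a') \<bullet> x + (\<alpha> * b + \<beta> * b')"
        by (simp only: inner_add_left inner_scaleR_left distrib_left add_ac)
      finally show "\<alpha> * u x + \<beta> * v x = (\<alpha> *\<^sub>R a + \<beta> *\<^sub>R a') \<bullet> x + (\<alpha> * b + \<beta> * b')" .
    qed
    then show ?thesis by blast
  qed
  have B: "continuous_on (mesh_union T) (\<lambda>x. \<alpha> * u x + \<beta> * v x)"
    using assms unfolding Vh_def mem_Collect_eq by (intro continuous_on_add continuous_on_mult_left) auto
  have C: "\<forall>x. x \<notin> mesh_union T \<longrightarrow> \<alpha> * u x + \<beta> * v x = 0"
    using assms unfolding Vh_def mem_Collect_eq by simp
  show ?thesis unfolding Vh_def mem_Collect_eq using A B C by blast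
qed

lemma Vh_diff: "u \<in> Vh T \<Longrightarrow> v \<in> Vh T \<Longrightarrow> (\<lambda>x. u x - v x) \<in> Vh T"
  using Vh_lin[of u T v 1 "-1"] by simp

lemma Vh_add: "u \<in> Vh T \<Longrightarrow> v \<in> Vh T \<Longrightarrow> (\<lambda>x. u x + v x) \<in> Vh T"
  using Vh_lin[of u T v 1 1] by simp

lemma Vh_neg: "u \<in> Vh T \<Longrightarrow> (\<lambda>x. - u x) \<in> Vh T"
  using Vh_lin[of u T u "-1" 0] by simp

lemma mesh_point_comb:
  assumes "simplicial_mesh T" "x \<in> mesh_union T"
  obtains S \<mu> where "S \<in> T" "finite S" "\<forall>s\<in>S. 0 \<le> \<mu> s" "sum \<mu> S = 1" "x = (\<Sum>s\<in>S. \<mu> s *\<^sub>R s)"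
proof -
  obtain S where S: "S \<in> T" "x \<in> convex hull S" using assms(2) by (auto simp: mesh_union_def)
  have "finite S" using assms(1) S by (auto simp: simplicial_mesh_def)
  then show ?thesis using S that by (auto simp: convex_hull_finite)
qed

lemma Vh_unique:
  assumes "simplicial_mesh T" "u \<in> Vh T" "v \<in> Vh T" "\<forall>x\<in>nodes T. u x = v x"
  shows "u = v"
proof
  fix x show "u x = v x"
  proof (cases "x \<in> mesh_union T")
    case True
    then obtain S \<mu> where S: "S \<in> T" "finite S" "\<forall>s\<in>S. 0 \<le> \<mu> s" "sum \<mu> S = 1" "x = (\<Sum>s\<in>S. \<mu> s *\<^sub>R s)"
      using mesh_point_comb[OF assms(1)] by blast
    have "S \<subseteq> nodes T" using S(1) by (auto simp: nodes_def)
    have "u x = (\<Sum>s\<in>S. \<mu> s * u s)" using Vh_comb[OF assms(2) S(1-4)] S(5) by simp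
    also have "\<dots> = (\<Sum>s\<in>S. \<mu> s * v s)" using \<open>S \<subseteq> nodes T\<close> assms(4) by (intro sum.cong) auto
    also have "\<dots> = v x" using Vh_comb[OF assms(3) S(1-4)] S(5) by simp
    finally show ?thesis .
  next
    case False then show ?thesis using assms(2,3) by (simp add: Vh_def)
  qed
qed



lemma affine_comb:
  assumes "sum \<mu> X = 1"
  shows "a \<bullet> (\<Sum>s\<in>X. \<mu> s *\<^sub>R s) + b = (\<Sum>s\<in>X. \<mu> s * (a \<bullet> s + b))"
proof -
  have "a \<bullet> (\<Sum>s\<in>X. \<mu> s *\<^sub>R s) + b = (\<Sum>s\<in>X. \<mu> s * (a \<bullet> s)) + (\<Sum>s\<in>X. \<mu> s) * b"
    using assms by (simp add: inner_sum_right)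
  also have "\<dots> = (\<Sum>s\<in>X. \<mu> s * (a \<bullet> s + b))"
    by (simp add: distrib_left sum.distrib sum_distrib_right)
  finally show ?thesis .
qed

lemma affine_interp:
  fixes S :: "(real^'n::finite) set"
  assumes "finite S" "\<not> affine_dependent S"
  shows "\<exists>a b. \<forall>s\<in>S. a \<bullet> s + b = \<phi> s"
proof (cases "S = {}")
  case True then show ?thesis by auto
next
  case False
  then obtain s0 where s0: "s0 \<in> S" by auto
  define B where "B = (\<lambda>x. -s0 + x) ` (S - {s0})"
  have indep: "\<not> dependent B"
    using affine_dependent_iff_dependent2[OF s0] assms(2) by (simp add: B_def)
  define f where "f y = \<phi> (s0 + y) - \<phi> s0" for y
  obtain g where g: "linear g" "\<forall>y\<in>B. g y = f y"
    using linear_independent_extend[OF indep, of f] by blast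
  define a where "a = (\<Sum>i\<in>Basis. g i *\<^sub>R i)"
  have ga: "g x = a \<bullet> x" for x
  proof -
    have "g x = g x \<bullet> 1" by simp
    also have "\<dots> = (\<Sum>i\<in>Basis. x \<bullet> i * (g i \<bullet> 1))" by (rule Linear_Algebra.linear_componentwise[OF g(1)])
    also have "\<dots> = a \<bullet> x" unfolding a_def inner_sum_left by (simp add: inner_commute mult.commute)
    finally show ?thesis .
  qed
  have "\<forall>s\<in>S. a \<bullet> s + (\<phi> s0 - a \<bullet> s0) = \<phi> s"
  proof
    fix s assume s: "s \<in> S"
    show "a \<bullet> s + (\<phi> s0 - a \<bullet> s0) = \<phi> s"
    proof (cases "s = s0")
      case True then show ?thesis by simp
    next
      case False
      then have "-s0 + s \<in> B" using s by (auto simp: B_def)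
      then have "g (-s0 + s) = \<phi> s - \<phi> s0" using g(2) by (simp add: f_def)
      then show ?thesis by (simp add: ga inner_diff_right)
    qed
  qed
  then show ?thesis by blast
qed

lemma Ih_exists:
  fixes T :: "('n::finite) mesh"
  assumes sm: "simplicial_mesh T"
  shows "\<exists>v. v \<in> Vh T \<and> (\<forall>x\<in>nodes T. v x = \<phi> x)"
proof -
  have "\<forall>S\<in>T. \<exists>ab. \<forall>s\<in>S. fst ab \<bullet> s + snd ab = \<phi> s"
    using affine_interp[of _ \<phi>] sm unfolding simplicial_mesh_def by fastforce
  then obtain AB where AB: "\<And>S s. S \<in> T \<Longrightarrow> s \<in> S \<Longrightarrow> fst (AB S) \<bullet> s + snd (AB S) = \<phi> s"
    by metis
  define A where "A S = fst (AB S)" for S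
  define Bc where "Bc S = snd (AB S)" for S
  have AB': "\<And>S s. S \<in> T \<Longrightarrow> s \<in> S \<Longrightarrow> A S \<bullet> s + Bc S = \<phi> s" using AB by (simp add: A_def Bc_def)
  have agree: "A S \<bullet> x + Bc S = A S' \<bullet> x + Bc S'"
    if S: "S \<in> T" "S' \<in> T" "x \<in> convex hull S" "x \<in> convex hull S'" for S S' x
  proof -
    have "x \<in> convex hull (S \<inter> S')" using sm S unfolding simplicial_mesh_def by blast
    moreover have fin: "finite (S \<inter> S')" using sm S unfolding simplicial_mesh_def by blast
    ultimately obtain \<mu> where mu: "sum \<mu> (S \<inter> S') = 1" "x = (\<Sum>s\<in>S \<inter> S'. \<mu> s *\<^sub>R s)"
      unfolding convex_hull_finite[OF fin] by blast
    have "A S \<bullet> x + Bc S = (\<Sum>s\<in>S \<inter> S'. \<mu> s * (A S \<bullet> s + Bc S))" using affine_comb[OF mu(1)] mu(2) by simp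
    also have "\<dots> = (\<Sum>s\<in>S \<inter> S'. \<mu> s * (A S' \<bullet> s + Bc S'))"
      using AB' S by (intro sum.cong) auto
    also have "\<dots> = A S' \<bullet> x + Bc S'" using affine_comb[OF mu(1)] mu(2) by simp
    finally show ?thesis .
  qed
  define v where "v x = (if x \<in> mesh_union T then (let S = SOME S. S \<in> T \<and> x \<in> convex hull S in A S \<bullet> x + Bc S) else 0)" for x
  have vS: "v x = A S \<bullet> x + Bc S" if "S \<in> T" "x \<in> convex hull S" for S x
  proof -
    have xm: "x \<in> mesh_union T" using that hull_sub_mesh_union by blast
    have ex: "\<exists>S. S \<in> T \<and> x \<in> convex hull S" using that by blast
    let ?S = "SOME S. S \<in> T \<and> x \<in> convex hull S"
    have "?S \<in> T \<and> x \<in> convex hull ?S" using someI_ex[OF ex] .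
    then show ?thesis using agree[of ?S S x] that xm by (simp add: v_def Let_def)
  qed
  have cont: "continuous_on (mesh_union T) v"
    unfolding mesh_union_def
  proof (rule continuous_on_closed_Union)
    show "finite T" using sm by (simp add: simplicial_mesh_def)
    fix S assume S: "S \<in> T"
    then have "finite S" using sm by (simp add: simplicial_mesh_def)
    then show "closed (convex hull S)" by (simp add: compact_imp_closed compact_convex_hull finite_imp_compact)
    have "continuous_on (convex hull S) (\<lambda>x. A S \<bullet> x + Bc S)" by (intro continuous_intros)
    then show "continuous_on (convex hull S) v"
      by (rule continuous_on_eq) (auto simp: vS[OF S])
  qed
  have "v \<in> Vh T"
    unfolding Vh_def mem_Collect_eq
  proof (intro conjI cont ballI allI impI)
    fix S assume "S \<in> T"
    then show "\<exists>a b. \<forall>x\<in>convex hull S. v x = a \<bullet> x + b" using vS by blast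
  next
    fix x assume "x \<notin> mesh_union T" then show "v x = 0" by (simp add: v_def)
  qed
  moreover have "\<forall>x\<in>nodes T. v x = \<phi> x"
  proof
    fix x assume "x \<in> nodes T"
    then obtain S where "S \<in> T" "x \<in> S" by (auto simp: nodes_def)
    then show "v x = \<phi> x" using vS AB' hull_subset[of S convex] by (metis subsetD)
  qed
  ultimately show ?thesis by blast
qed

lemma Ih_props:
  assumes "simplicial_mesh T"
  shows "Ih T \<phi> \<in> Vh T" "\<forall>x\<in>nodes T. Ih T \<phi> x = \<phi> x"
proof -
  have "\<exists>!v. v \<in> Vh T \<and> (\<forall>x\<in>nodes T. v x = \<phi> x)"
    using Ih_exists[OF assms, of \<phi>] Vh_unique[OF assms] by (metis (mono_tags))
  from theI'[OF this] show "Ih T \<phi> \<in> Vh T" "\<forall>x\<in>nodes T. Ih T \<phi> x = \<phi> x"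
    unfolding Ih_def by blast+
qed



lemma jensen_sq:
  fixes x p :: "real^'n::finite"
  assumes "finite S" "S \<noteq> {}" "\<forall>s\<in>S. 0 \<le> \<mu> s" "sum \<mu> S = 1" "x = (\<Sum>s\<in>S. \<mu> s *\<^sub>R s)"
  shows "(norm (x - p))\<^sup>2 \<le> (\<Sum>s\<in>S. \<mu> s * (norm (s - p))\<^sup>2)"
proof -
  have "x - p = (\<Sum>s\<in>S. \<mu> s *\<^sub>R (s - p))"
    using assms(4,5) by (simp add: scaleR_diff_right sum_subtractf flip: scaleR_left.sum)
  then have "norm (x - p) \<le> (\<Sum>s\<in>S. \<mu> s * norm (s - p))"
    using assms(3) by (auto intro!: order_trans[OF norm_sum] sum_mono)
  then have "(norm (x - p))\<^sup>2 \<le> (\<Sum>s\<in>S. \<mu> s * norm (s - p))\<^sup>2"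
    by (simp add: power_mono)
  also have "\<dots> \<le> (\<Sum>s\<in>S. \<mu> s * (norm (s - p))\<^sup>2)"
    using convex_on_sum[OF assms(1,2) convex_power2, of \<mu> "\<lambda>s. norm (s - p)"] assms(3,4) by simp
  finally show ?thesis .
qed

lemma Ih_ge:
  fixes T :: "('n::finite) mesh"
  assumes sm: "simplicial_mesh T" and M: "0 \<le> M" and x: "x \<in> mesh_union T"
  shows "M / 2 * (norm (x - p))\<^sup>2 \<le> Ih T (\<lambda>x. M / 2 * (norm (x - p))\<^sup>2) x"
proof -
  obtain S \<mu> where S: "S \<in> T" "finite S" "\<forall>s\<in>S. 0 \<le> \<mu> s" "sum \<mu> S = 1" "x = (\<Sum>s\<in>S. \<mu> s *\<^sub>R s)"
    using mesh_point_comb[OF sm x] by blast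
  have ne: "S \<noteq> {}" using S(4) by auto
  have sub: "S \<subseteq> nodes T" using S(1) by (auto simp: nodes_def)
  have "Ih T (\<lambda>x. M / 2 * (norm (x - p))\<^sup>2) x = (\<Sum>s\<in>S. \<mu> s * Ih T (\<lambda>x. M / 2 * (norm (x - p))\<^sup>2) s)"
    using Vh_comb[OF Ih_props(1)[OF sm] S(1-4)] S(5) by simp
  also have "\<dots> = (\<Sum>s\<in>S. \<mu> s * (M / 2 * (norm (s - p))\<^sup>2))"
    using Ih_props(2)[OF sm] sub by (intro sum.cong) auto
  also have "\<dots> = M / 2 * (\<Sum>s\<in>S. \<mu> s * (norm (s - p))\<^sup>2)"
    by (simp add: sum_distrib_left mult_ac)
  finally show ?thesis
    using jensen_sq[OF S(2) ne S(3-5), of p] M by (simp add: mult_left_mono)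
qed

lemma extreme_node:
  fixes T :: "('n::finite) mesh"
  assumes sm: "simplicial_mesh T" and v: "v \<in> Vh T"
  shows "\<exists>e\<in>nodes T. (\<forall>x\<in>mesh_union T. v e \<le> v x) \<and>
     (\<forall>a\<in>mesh_union T. \<forall>b\<in>mesh_union T. v a = v e \<longrightarrow> v b = v e \<longrightarrow> e = (1/2) *\<^sub>R (a + b) \<longrightarrow> a = b)"
proof -
  define m where "m = Min (v ` nodes T)"
  have fin: "finite (nodes T)" and ne: "nodes T \<noteq> {}" using finite_nodes[OF sm] nodes_ne[OF sm] .
  have mle: "\<And>n. n \<in> nodes T \<Longrightarrow> m \<le> v n" using fin by (simp add: m_def)
  have "m \<in> v ` nodes T" using fin ne by (simp add: m_def)
  define N where "N = {n\<in>nodes T. v n = m}"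
  have finN: "finite N" using fin by (simp add: N_def)
  have neN: "N \<noteq> {}" using \<open>m \<in> v ` nodes T\<close> by (auto simp: N_def)
  obtain e where e: "e \<in> N" "\<And>n. n \<in> N \<Longrightarrow> norm n \<le> norm e"
  proof -
    have "Max (norm ` N) \<in> norm ` N" using finN neN by simp
    then obtain e where "e \<in> N" "norm e = Max (norm ` N)" by auto
    moreover have "\<And>n. n \<in> N \<Longrightarrow> norm n \<le> Max (norm ` N)" using finN by simp
    ultimately show ?thesis using that by auto
  qed
  have key: "v x \<ge> m \<and> (v x = m \<longrightarrow> norm x \<le> norm e)" if x: "x \<in> mesh_union T" for x
  proof -
    obtain S \<mu> where S: "S \<in> T" "finite S" "\<forall>s\<in>S. 0 \<le> \<mu> s" "sum \<mu> S = 1" "x = (\<Sum>s\<in>S. \<mu> s *\<^sub>R s)"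
      using mesh_point_comb[OF sm x] by blast
    have sub: "S \<subseteq> nodes T" using S(1) by (auto simp: nodes_def)
    have vx: "v x = (\<Sum>s\<in>S. \<mu> s * v s)" using Vh_comb[OF v S(1-4)] S(5) by simp
    have diff: "v x - m = (\<Sum>s\<in>S. \<mu> s * (v s - m))"
      using vx S(4) by (simp add: right_diff_distrib sum_subtractf flip: sum_distrib_right)
    have nn: "\<forall>s\<in>S. 0 \<le> \<mu> s * (v s - m)" using S(3) sub mle by auto
    have "0 \<le> (\<Sum>s\<in>S. \<mu> s * (v s - m))" using nn by (simp add: sum_nonneg)
    then have ge: "v x \<ge> m" using diff by linarith
    moreover have "norm x \<le> norm e" if "v x = m"
    proof -
      have "(\<Sum>s\<in>S. \<mu> s * (v s - m)) = 0" using diff that by simp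
      then have z: "\<forall>s\<in>S. \<mu> s * (v s - m) = 0"
        using sum_nonneg_eq_0_iff[OF S(2), of "\<lambda>s. \<mu> s * (v s - m)"] nn by auto
      have "\<forall>s\<in>S. \<mu> s * norm s \<le> \<mu> s * norm e"
      proof
        fix s assume s: "s \<in> S"
        show "\<mu> s * norm s \<le> \<mu> s * norm e"
        proof (cases "\<mu> s = 0")
          case True then show ?thesis by simp
        next
          case False
          then have "v s = m" using z s by auto
          then have "s \<in> N" using s sub by (auto simp: N_def)
          then show ?thesis using e(2) S(3) s by (simp add: mult_left_mono)
        qed
      qed
      then have "(\<Sum>s\<in>S. \<mu> s * norm s) \<le> (\<Sum>s\<in>S. \<mu> s * norm e)" by (intro sum_mono) auto
      also have "\<dots> = norm e" using S(4) by (simp flip: sum_distrib_right)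
      finally have "(\<Sum>s\<in>S. \<mu> s * norm s) \<le> norm e" .
      moreover have "norm x \<le> (\<Sum>s\<in>S. \<mu> s * norm s)"
        using S(3,5) by (auto intro!: order_trans[OF norm_sum] sum_mono)
      ultimately show ?thesis by linarith
    qed
    ultimately show ?thesis by blast
  qed
  have ve: "v e = m" and en: "e \<in> nodes T" using e(1) by (auto simp: N_def)
  show ?thesis
  proof (intro bexI[OF _ en] conjI ballI impI)
    fix x assume "x \<in> mesh_union T" then show "v e \<le> v x" using key ve by auto
  next
    fix a b assume ab: "a \<in> mesh_union T" "b \<in> mesh_union T" "v a = v e" "v b = v e" "e = (1/2) *\<^sub>R (a + b)"
    have na: "norm a \<le> norm e" and nb: "norm b \<le> norm e" using key ab ve by auto
    have "(norm (a - b))\<^sup>2 = 2 * (norm a)\<^sup>2 + 2 * (norm b)\<^sup>2 - (norm (a + b))\<^sup>2"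
      by (simp add: power2_norm_eq_inner inner_add_left inner_add_right inner_diff_left inner_diff_right inner_commute)
    also have "(norm (a + b))\<^sup>2 = 4 * (norm e)\<^sup>2"
    proof -
      have "a + b = 2 *\<^sub>R e" using ab(5) by simp
      then show ?thesis by (simp add: power_mult_distrib)
    qed
    finally have eq: "(norm (a - b))\<^sup>2 = 2 * (norm a)\<^sup>2 + 2 * (norm b)\<^sup>2 - 4 * (norm e)\<^sup>2" .
    have "(norm a)\<^sup>2 \<le> (norm e)\<^sup>2" "(norm b)\<^sup>2 \<le> (norm e)\<^sup>2"
      using power_mono[OF na norm_ge_zero, of 2] power_mono[OF nb norm_ge_zero, of 2] by auto
    then have "(norm (a - b))\<^sup>2 \<le> 0" using eq by linarith
    then show "a = b" by simp
  qed
qed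



lemma S1_ne: "(S1 :: (real^'n::finite^'n) set) \<noteq> {}"
proof -
  define B :: "real^'n^'n" where "B = (1 / real CARD('n)) *\<^sub>R mat 1"
  have "transpose B = B" by (simp add: B_def transpose_def mat_def vec_eq_iff)
  moreover have "0 \<le> x \<bullet> (B *v x)" for x
  proof -
    have "B *v x = (1 / real CARD('n)) *\<^sub>R x"
      by (simp add: B_def flip: scaleR_matrix_vector_assoc)
    then show ?thesis by simp
  qed
  moreover have "trace B = 1" by (simp add: B_def trace_def mat_def)
  ultimately have "B \<in> S1" by (simp add: S1_def psd_matrix_def symmetric_matrix_def)
  then show ?thesis by blast
qed

lemma ctrl_facts:
  assumes "admissible_controls F c"
  shows "S1 = ctrl_map ` F" "inj_on ctrl_map F" "compact F" "F \<noteq> {}"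
    "\<And>p. p \<in> F \<Longrightarrow> ctrl_of F (ctrl_map p) = p"
  using assms S1_ne unfolding admissible_controls_def bij_betw_def ctrl_of_def
  by (auto simp: the_inv_into_f_f)

lemma ctrl_map_entry:
  "(ctrl_map p) $ i $ i' = (\<Sum>j\<in>UNIV. (\<Sum>k\<in>UNIV. fst p $ i $ k * snd p $ k $ j) * fst p $ i' $ j)"
  by (cases p) (simp add: ctrl_map_def matrix_matrix_mult_def transpose_def)

lemma cont_det:
  fixes A :: "'a::topological_space \<Rightarrow> real^'n::finite^'n"
  assumes "\<And>i j. continuous_on S (\<lambda>x. A x $ i $ j)"
  shows "continuous_on S (\<lambda>x. det (A x))"
  unfolding det_def by (intro continuous_on_sum continuous_on_mult continuous_on_const continuous_on_prod assms)

lemma cont_rd: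
  shows "continuous_on (F::((real^'n::finite^'n) \<times> (real^'n^'n)) set) (\<lambda>p. root CARD('n) (det (ctrl_map p)))"
proof -
  have "continuous_on F (\<lambda>p. (ctrl_map p) $ i $ j)" for i j
    unfolding ctrl_map_entry by (intro continuous_intros)
  then have "continuous_on F (\<lambda>p. det (ctrl_map p))" by (rule cont_det)
  then show ?thesis by (rule continuous_on_real_root)
qed

lemma diag_sum:
  assumes "diagonal_matrix l"
  shows "(\<Sum>k\<in>UNIV. s $ i $ k * l $ k $ j) = s $ i $ j * l $ j $ j"
proof -
  have "(\<Sum>k\<in>UNIV. s $ i $ k * l $ k $ j) = s $ i $ j * l $ j $ j + (\<Sum>k\<in>UNIV - {j}. s $ i $ k * l $ k $ j)"
    by (subst sum.remove[of UNIV j]) auto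
  also have "(\<Sum>k\<in>UNIV - {j}. s $ i $ k * l $ k $ j) = 0"
    using assms by (intro sum.neutral) (auto simp: diagonal_matrix_def)
  finally show ?thesis by simp
qed

lemma ctrl_trace:
  assumes "admissible_controls F c" "p \<in> F"
  shows "(\<Sum>j\<in>UNIV. snd p $ j $ j * (norm (column j (fst p)))\<^sup>2) = 1"
proof -
  obtain sg lm where p: "p = (sg, lm)" by (cases p)
  have diag: "diagonal_matrix lm" using assms p unfolding admissible_controls_def by auto
  have "ctrl_map p \<in> S1" using ctrl_facts(1)[OF assms(1)] assms(2) by blast
  then have "1 = trace (ctrl_map p)" by (simp add: S1_def)
  also have "\<dots> = (\<Sum>i\<in>UNIV. \<Sum>j\<in>UNIV. sg $ i $ j * lm $ j $ j * sg $ i $ j)"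
    unfolding trace_def ctrl_map_entry p fst_conv snd_conv by (intro sum.cong refl) (simp add: diag_sum[OF diag])
  also have "\<dots> = (\<Sum>j\<in>UNIV. \<Sum>i\<in>UNIV. lm $ j $ j * (sg $ i $ j * sg $ i $ j))"
    by (subst sum.swap) (simp add: mult_ac)
  also have "\<dots> = (\<Sum>j\<in>UNIV. snd p $ j $ j * (norm (column j (fst p)))\<^sup>2)"
    by (simp add: p power2_norm_eq_inner inner_vec_def column_def sum_distrib_left)
  finally show ?thesis by simp
qed

lemma ctrl_det_nonneg:
  assumes "admissible_controls F c" "p \<in> F"
  shows "0 \<le> det (ctrl_map p)"
proof -
  obtain sg lm where p: "p = (sg, lm)" by (cases p)
  have diag: "diagonal_matrix lm" "\<forall>i. 0 \<le> lm $ i $ i" using assms p unfolding admissible_controls_def by auto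
  have "det (ctrl_map p) = det sg * det lm * det sg" by (simp add: p ctrl_map_def det_mul)
  moreover have "det lm = prod (\<lambda>i. lm $ i $ i) UNIV"
    using diag(1) by (intro det_diagonal) (auto simp: diagonal_matrix_def)
  moreover have "0 \<le> prod (\<lambda>i. lm $ i $ i) UNIV" using diag(2) by (simp add: prod_nonneg)
  moreover have "det sg * P * det sg = (det sg * det sg) * P" for P by (simp add: mult_ac)
  ultimately show ?thesis by simp
qed

lemma Lh_inode:
  fixes F :: "((real^'n::finite^'n) \<times> (real^'n^'n)) set"
  assumes "admissible_controls F c" "p \<in> F" "e \<in> inodes T"
  shows "Lh F f g T k (ctrl_map p) s W e =
    - (\<Sum>j\<in>UNIV. snd p $ j $ j * (W (e - k e *\<^sub>R column j (fst p)) - 2 * s + W (e + k e *\<^sub>R column j (fst p))) / (k e)\<^sup>2)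
    + f e * root CARD('n) (det (ctrl_map p))"
  using assms ctrl_facts(5)[OF assms(1,2)] by (cases p) (simp add: Lh_def Let_def)

lemma Hh_F:
  assumes "admissible_controls F c"
  shows "Hh F f g T k s W e = (SUP p\<in>F. Lh F f g T k (ctrl_map p) s W e)"
  unfolding Hh_def ctrl_facts(1)[OF assms] by (simp add: image_comp)



definition Dsum :: "(real^'n \<Rightarrow> real) \<Rightarrow> real^'n \<Rightarrow> (real^'n \<Rightarrow> real) \<Rightarrow> real \<Rightarrow> (real^'n::finite^'n) \<times> (real^'n^'n) \<Rightarrow> real" where
  "Dsum k e h s p = (\<Sum>j\<in>UNIV. snd p $ j $ j * (h (e - k e *\<^sub>R column j (fst p)) - 2 * s + h (e + k e *\<^sub>R column j (fst p))))"

lemma ext_in: "x \<in> mesh_union T \<Longrightarrow> ext T h x = h x"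
  by (simp add: ext_def)

lemma Lh_Dsum:
  fixes F :: "((real^'n::finite^'n) \<times> (real^'n^'n)) set"
  assumes "admissible_controls F c" "p \<in> F" "e \<in> inodes T"
  shows "Lh F f g T k (ctrl_map p) s W e = - (Dsum k e W s p / (k e)\<^sup>2) + f e * root CARD('n) (det (ctrl_map p))"
  unfolding Lh_inode[OF assms] Dsum_def by (simp add: sum_divide_distrib)

lemma stencil_mem:
  assumes sm: "simplicial_mesh T" and ak: "admissible_k F T k" and e: "e \<in> inodes T" and p: "p \<in> F"
  shows "e - k e *\<^sub>R column j (fst p) \<in> mesh_union T" "e + k e *\<^sub>R column j (fst p) \<in> mesh_union T" "0 < k e"
proof -
  have eO: "e \<in> Omega_h T" using inodes_in_Omega_h[OF sm e] .
  obtain sg lm where pp: "p = (sg, lm)" by (cases p)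
  have "e + k e *\<^sub>R column j sg \<in> closure (Omega_h T) \<and> e - k e *\<^sub>R column j sg \<in> closure (Omega_h T)"
    using ak eO p pp unfolding admissible_k_def by fastforce
  then show "e - k e *\<^sub>R column j (fst p) \<in> mesh_union T" "e + k e *\<^sub>R column j (fst p) \<in> mesh_union T"
    using closure_Omega_h_sub[OF sm] pp by auto
  show "0 < k e" using ak eO unfolding admissible_k_def by blast
qed

lemma cont_column: "continuous_on F (\<lambda>p. column j (fst p :: real^'n::finite^'m::finite))"
  unfolding column_def by (intro continuous_intros)

lemma cont_Dsum:
  assumes h: "continuous_on (mesh_union T) h"
    and st: "\<And>p j. p \<in> F \<Longrightarrow> e - k e *\<^sub>R column j (fst p) \<in> mesh_union T \<and> e + k e *\<^sub>R column j (fst p) \<in> mesh_union T"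
  shows "continuous_on F (Dsum k e h s)"
proof -
  have c1: "continuous_on F (\<lambda>p. h (e - k e *\<^sub>R column j (fst p)))" for j
    by (rule continuous_on_compose2[OF h]) (auto intro!: continuous_intros cont_column dest: st)
  have c2: "continuous_on F (\<lambda>p. h (e + k e *\<^sub>R column j (fst p)))" for j
    by (rule continuous_on_compose2[OF h]) (auto intro!: continuous_intros cont_column dest: st)
  show ?thesis unfolding Dsum_def
    by (intro continuous_on_sum continuous_on_mult continuous_on_add continuous_on_diff c1 c2 continuous_on_const
        continuous_on_component continuous_on_snd continuous_on_id)
qed

lemma real_aux: "(A::real) + B = 2 * C + 2 * D \<Longrightarrow> M / 2 * A - 2 * (M / 2 * C) + M / 2 * B = M * D"
proof -
  assume h: "A + B = 2 * C + 2 * D"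
  have "M / 2 * A - 2 * (M / 2 * C) + M / 2 * B = M / 2 * (A + B) - M * C" by (simp add: algebra_simps)
  also have "\<dots> = M * D" using h by (simp add: algebra_simps)
  finally show ?thesis .
qed

lemma zeta_second_diff:
  fixes e t p :: "real^'n::finite"
  shows "M / 2 * (norm (e - t - p))\<^sup>2 - 2 * (M / 2 * (norm (e - p))\<^sup>2) + M / 2 * (norm (e + t - p))\<^sup>2 = M * (norm t)\<^sup>2"
proof -
  have "(norm (e - t - p))\<^sup>2 + (norm (e + t - p))\<^sup>2 = 2 * (norm (e - p))\<^sup>2 + 2 * (norm t)\<^sup>2"
    by (simp add: power2_norm_eq_inner inner_add_left inner_add_right inner_diff_left inner_diff_right inner_commute)
  then show ?thesis using real_aux[of "(norm (e - t - p))\<^sup>2" "(norm (e + t - p))\<^sup>2" "(norm (e - p))\<^sup>2" "(norm t)\<^sup>2" M] by simp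
qed

lemma Ih_stencil:
  fixes T :: "('n::finite) mesh" and p :: "real^'n"
  assumes sm: "simplicial_mesh T" and M: "0 \<le> M" and e: "e \<in> nodes T"
    and a: "e - t \<in> mesh_union T" and b: "e + t \<in> mesh_union T"
  defines "I \<equiv> Ih T (\<lambda>x. M / 2 * (norm (x - p))\<^sup>2)"
  shows "M * (norm t)\<^sup>2 \<le> I (e - t) - 2 * I e + I (e + t)"
proof -
  have "I e = M / 2 * (norm (e - p))\<^sup>2" using Ih_props(2)[OF sm] e by (simp add: I_def)
  moreover have "M / 2 * (norm (e - t - p))\<^sup>2 \<le> I (e - t)" using Ih_ge[OF sm M a] by (simp add: I_def)
  moreover have "M / 2 * (norm (e + t - p))\<^sup>2 \<le> I (e + t)" using Ih_ge[OF sm M b] by (simp add: I_def)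
  ultimately show ?thesis using zeta_second_diff[of M e t p] by linarith
qed

lemma interior_contra:
  fixes F :: "((real^'n::finite^'n) \<times> (real^'n^'n)) set"
  assumes ac: "admissible_controls F c" and sm: "simplicial_mesh T" and ak: "admissible_k F T k"
    and e: "e \<in> inodes T"
    and mn: "\<forall>x\<in>mesh_union T. z e \<le> z x"
    and ex: "\<forall>a\<in>mesh_union T. \<forall>b\<in>mesh_union T. z a = z e \<longrightarrow> z b = z e \<longrightarrow> e = (1/2) *\<^sub>R (a + b) \<longrightarrow> a = b"
    and p: "p \<in> F" and D: "Dsum k e z (z e) p \<le> 0"
  shows False
proof -
  let ?t = "\<lambda>j. k e *\<^sub>R column j (fst p)"
  have lm0: "\<forall>j. 0 \<le> snd p $ j $ j" using ac p unfolding admissible_controls_def by auto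
  have mem: "e - ?t j \<in> mesh_union T" "e + ?t j \<in> mesh_union T" for j
    using stencil_mem[OF sm ak e p] by auto
  have kpos: "0 < k e" using stencil_mem[OF sm ak e p] by auto
  have nn: "\<forall>j\<in>UNIV. 0 \<le> snd p $ j $ j * (z (e - ?t j) - 2 * z e + z (e + ?t j))"
  proof
    fix j :: 'n
    have "z e \<le> z (e - ?t j)" "z e \<le> z (e + ?t j)" using mn mem by auto
    then have "0 \<le> z (e - ?t j) - 2 * z e + z (e + ?t j)" by linarith
    then show "0 \<le> snd p $ j $ j * (z (e - ?t j) - 2 * z e + z (e + ?t j))" using lm0 by simp
  qed
  have "Dsum k e z (z e) p = 0" using D nn sum_nonneg[of UNIV] unfolding Dsum_def
    by (metis (no_types, lifting) order_antisym_conv)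
  then have z0: "\<forall>j. snd p $ j $ j * (z (e - ?t j) - 2 * z e + z (e + ?t j)) = 0"
    using sum_nonneg_eq_0_iff[of UNIV "\<lambda>j. snd p $ j $ j * (z (e - ?t j) - 2 * z e + z (e + ?t j))"] nn
    unfolding Dsum_def by auto
  have "(\<Sum>j\<in>UNIV. snd p $ j $ j * (norm (column j (fst p)))\<^sup>2) = 1" using ctrl_trace[OF ac p] .
  then obtain j where j: "snd p $ j $ j * (norm (column j (fst p)))\<^sup>2 \<noteq> 0"
    by (metis (no_types, lifting) sum.neutral zero_neq_one)
  then have lj: "snd p $ j $ j \<noteq> 0" and cj: "column j (fst p) \<noteq> 0" by auto
  then have "z (e - ?t j) - 2 * z e + z (e + ?t j) = 0" using z0 by auto
  moreover have "z e \<le> z (e - ?t j)" "z e \<le> z (e + ?t j)" using mn mem by auto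
  ultimately have "z (e - ?t j) = z e" "z (e + ?t j) = z e" by linarith+
  moreover have "e = (1/2) *\<^sub>R ((e - ?t j) + (e + ?t j))" by (simp add: scaleR_2 flip: scaleR_add_left)
  ultimately have eq: "e - ?t j = e + ?t j" using ex mem by blast
  have eqc: "(e - ?t j) $ i = (e + ?t j) $ i" for i by (simp only: eq)
  have "?t j = 0"
  proof (rule iffD2[OF vec_eq_iff], rule allI)
    fix i
    have "e $ i - ?t j $ i = e $ i + ?t j $ i" using eqc[of i] by simp
    then show "?t j $ i = 0 $ i" by simp
  qed
  then show False using kpos cj by simp
qed



lemma norm_kcol: "(norm (a *\<^sub>R x))\<^sup>2 = a\<^sup>2 * (norm x)\<^sup>2"
  by (simp add: power_mult_distrib)

lemma Dsum_compare:
  fixes F :: "((real^'n::finite^'n) \<times> (real^'n^'n)) set"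
  assumes ac: "admissible_controls F c" and q: "q \<in> F"
    and le: "\<And>j. h1 (e - k e *\<^sub>R column j (fst q)) - 2 * s1 + h1 (e + k e *\<^sub>R column j (fst q))
              + M * (k e)\<^sup>2 * (norm (column j (fst q)))\<^sup>2
            \<le> h2 (e - k e *\<^sub>R column j (fst q)) - 2 * s2 + h2 (e + k e *\<^sub>R column j (fst q))"
  shows "Dsum k e h1 s1 q + M * (k e)\<^sup>2 \<le> Dsum k e h2 s2 q"
proof -
  have lm0: "\<forall>j. 0 \<le> snd q $ j $ j" using ac q unfolding admissible_controls_def by auto
  have "M * (k e)\<^sup>2 = M * (k e)\<^sup>2 * (\<Sum>j\<in>UNIV. snd q $ j $ j * (norm (column j (fst q)))\<^sup>2)"
    using ctrl_trace[OF ac q] by simp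
  also have "\<dots> = (\<Sum>j\<in>UNIV. snd q $ j $ j * (M * (k e)\<^sup>2 * (norm (column j (fst q)))\<^sup>2))"
    by (simp add: sum_distrib_left mult_ac)
  finally have "Dsum k e h1 s1 q + M * (k e)\<^sup>2 =
     (\<Sum>j\<in>UNIV. snd q $ j $ j * (h1 (e - k e *\<^sub>R column j (fst q)) - 2 * s1 + h1 (e + k e *\<^sub>R column j (fst q))
              + M * (k e)\<^sup>2 * (norm (column j (fst q)))\<^sup>2))"
    unfolding Dsum_def by (simp add: sum.distrib distrib_left)
  also have "\<dots> \<le> Dsum k e h2 s2 q"
    unfolding Dsum_def using lm0 le by (intro sum_mono mult_left_mono) auto
  finally show ?thesis .
qed

lemma Lh_le_Hh:
  fixes F :: "((real^'n::finite^'n) \<times> (real^'n^'n)) set"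
  assumes ac: "admissible_controls F c" and sm: "simplicial_mesh T" and ak: "admissible_k F T k"
    and e: "e \<in> inodes T" and u: "u \<in> Vh T" and q: "q \<in> F"
  shows "Lh F f g T k (ctrl_map q) (u e) (ext T u) e \<le> Hh F f g T k (u e) (ext T u) e"
proof -
  let ?G = "\<lambda>q. - (Dsum k e (ext T u) (u e) q / (k e)\<^sup>2) + f e * root CARD('n) (det (ctrl_map q))"
  have hc: "continuous_on (mesh_union T) (ext T u)"
    using u unfolding Vh_def by (auto intro: continuous_on_eq simp: ext_in)
  have "continuous_on F (Dsum k e (ext T u) (u e))"
    by (rule cont_Dsum[OF hc]) (use stencil_mem[OF sm ak e] in blast)
  moreover have "0 < k e" using stencil_mem[OF sm ak e q] by simp
  ultimately have "continuous_on F (\<lambda>q. Dsum k e (ext T u) (u e) q / (k e)\<^sup>2)"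
    by (intro continuous_on_divide continuous_on_const) auto
  then have "continuous_on F ?G" by (intro continuous_on_add continuous_on_minus continuous_on_mult_left cont_rd)
  then have "compact (?G ` F)" using ctrl_facts(3)[OF ac] compact_continuous_image by blast
  then have bdd: "bdd_above (?G ` F)" by (intro bounded_imp_bdd_above compact_imp_bounded)
  have eq: "(\<lambda>q. Lh F f g T k (ctrl_map q) (u e) (ext T u) e) ` F = ?G ` F"
    using Lh_Dsum[OF ac _ e] by (intro image_cong) auto
  show ?thesis unfolding Hh_F[OF ac] using bdd q eq
    by (metis (no_types, lifting) cSUP_upper)
qed



lemma sol_facts:
  assumes "discrete_solution F f g T k u" "x \<in> nodes T"
  shows "u \<in> Vh T" "Hh F f g T k (u x) (ext T u) x = 0"
  using assms by (auto simp: discrete_solution_def)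

lemma min_case:
  fixes F :: "((real^'n::finite^'n) \<times> (real^'n^'n)) set" and p0 :: "real^'n"
  assumes ac: "admissible_controls F c" and sm: "simplicial_mesh T" and ak: "admissible_k F T k"
    and sol: "discrete_solution F f g T k u" and e: "e \<in> inodes T" and M: "0 \<le> M"
    and fM: "\<forall>q\<in>F. f e * root CARD('n) (det (ctrl_map q)) \<le> M"
  shows "\<exists>q\<in>F. Dsum k e (\<lambda>y. u y - Ih T (\<lambda>x. M / 2 * (norm (x - p0))\<^sup>2) y)
      ((\<lambda>y. u y - Ih T (\<lambda>x. M / 2 * (norm (x - p0))\<^sup>2) y) e) q \<le> 0"
proof (rule ccontr)
  let ?I = "Ih T (\<lambda>x. M / 2 * (norm (x - p0))\<^sup>2)"
  let ?w = "\<lambda>y. u y - ?I y"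
  assume "\<not> ?thesis"
  then have pos: "\<forall>q\<in>F. 0 < Dsum k e ?w (?w e) q" by auto
  have en: "e \<in> nodes T" using e by (simp add: inodes_def)
  have u: "u \<in> Vh T" and H0: "Hh F f g T k (u e) (ext T u) e = 0" using sol_facts[OF sol en] by auto
  have wV: "?w \<in> Vh T" using Vh_diff[OF u Ih_props(1)[OF sm]] .
  have wc: "continuous_on (mesh_union T) ?w" using wV by (simp add: Vh_def)
  have cD: "continuous_on F (Dsum k e ?w (?w e))"
    by (rule cont_Dsum[OF wc]) (use stencil_mem[OF sm ak e] in blast)
  obtain q0 where q0: "q0 \<in> F" "\<forall>q\<in>F. Dsum k e ?w (?w e) q0 \<le> Dsum k e ?w (?w e) q"
    using continuous_attains_inf[OF ctrl_facts(3,4)[OF ac] cD] by blast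
  define \<delta> where "\<delta> = Dsum k e ?w (?w e) q0"
  have dpos: "0 < \<delta>" using pos q0 by (simp add: \<delta>_def)
  have kpos: "0 < k e" using stencil_mem[OF sm ak e q0(1)] by simp
  have bound: "Lh F f g T k (ctrl_map q) (u e) (ext T u) e \<le> - (\<delta> / (k e)\<^sup>2)" if q: "q \<in> F" for q
  proof -
    have mem: "e - k e *\<^sub>R column j (fst q) \<in> mesh_union T" "e + k e *\<^sub>R column j (fst q) \<in> mesh_union T" for j
      using stencil_mem[OF sm ak e q] by auto
    have "Dsum k e ?w (?w e) q + M * (k e)\<^sup>2 \<le> Dsum k e (ext T u) (u e) q"
    proof (rule Dsum_compare[OF ac q])
      fix j
      let ?a = "e - k e *\<^sub>R column j (fst q)" and ?b = "e + k e *\<^sub>R column j (fst q)"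
      have "M * (norm (k e *\<^sub>R column j (fst q)))\<^sup>2 \<le> ?I ?a - 2 * ?I e + ?I ?b"
        using Ih_stencil[OF sm M en mem(1)[of j] mem(2)[of j]] by simp
      then have "M * (k e)\<^sup>2 * (norm (column j (fst q)))\<^sup>2 \<le> ?I ?a - 2 * ?I e + ?I ?b"
        by (simp only: norm_kcol mult.assoc)
      then show "?w ?a - 2 * ?w e + ?w ?b + M * (k e)\<^sup>2 * (norm (column j (fst q)))\<^sup>2
          \<le> ext T u ?a - 2 * u e + ext T u ?b"
        using ext_in[OF mem(1)[of j]] ext_in[OF mem(2)[of j]] by simp
    qed
    moreover have "Dsum k e ?w (?w e) q0 \<le> Dsum k e ?w (?w e) q" using q0 q by blast
    ultimately have "\<delta> + M * (k e)\<^sup>2 \<le> Dsum k e (ext T u) (u e) q" by (simp add: \<delta>_def)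
    then have "(\<delta> + M * (k e)\<^sup>2) / (k e)\<^sup>2 \<le> Dsum k e (ext T u) (u e) q / (k e)\<^sup>2"
      using kpos by (simp add: divide_right_mono)
    moreover have "(\<delta> + M * (k e)\<^sup>2) / (k e)\<^sup>2 = \<delta> / (k e)\<^sup>2 + M" using kpos by (simp add: field_simps)
    moreover have "f e * root CARD('n) (det (ctrl_map q)) \<le> M" using fM q by blast
    ultimately show ?thesis unfolding Lh_Dsum[OF ac q e] by linarith
  qed
  have "Hh F f g T k (u e) (ext T u) e \<le> - (\<delta> / (k e)\<^sup>2)"
    unfolding Hh_F[OF ac] using ctrl_facts(4)[OF ac] bound by (intro cSUP_least) auto
  moreover have "0 < \<delta> / (k e)\<^sup>2" using dpos kpos by simp
  ultimately show False using H0 by linarith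
qed

lemma max_case:
  fixes F :: "((real^'n::finite^'n) \<times> (real^'n^'n)) set" and p0 :: "real^'n"
  assumes ac: "admissible_controls F c" and sm: "simplicial_mesh T" and ak: "admissible_k F T k"
    and sol: "discrete_solution F f g T k u" and e: "e \<in> inodes T" and M: "0 \<le> M"
    and fe: "0 \<le> f e"
  shows "\<exists>q\<in>F. Dsum k e (\<lambda>y. - (u y + Ih T (\<lambda>x. M / 2 * (norm (x - p0))\<^sup>2) y))
      ((\<lambda>y. - (u y + Ih T (\<lambda>x. M / 2 * (norm (x - p0))\<^sup>2) y)) e) q \<le> 0"
proof (rule ccontr)
  let ?I = "Ih T (\<lambda>x. M / 2 * (norm (x - p0))\<^sup>2)"
  let ?w = "\<lambda>y. - (u y + ?I y)"
  assume "\<not> ?thesis"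
  then have pos: "\<forall>q\<in>F. 0 < Dsum k e ?w (?w e) q" by auto
  have en: "e \<in> nodes T" using e by (simp add: inodes_def)
  have u: "u \<in> Vh T" and H0: "Hh F f g T k (u e) (ext T u) e = 0" using sol_facts[OF sol en] by auto
  have wV: "?w \<in> Vh T" using Vh_neg[OF Vh_add[OF u Ih_props(1)[OF sm]]] .
  have wc: "continuous_on (mesh_union T) ?w" using wV by (simp add: Vh_def)
  have cD: "continuous_on F (Dsum k e ?w (?w e))"
    by (rule cont_Dsum[OF wc]) (use stencil_mem[OF sm ak e] in blast)
  obtain q0 where q0: "q0 \<in> F" "\<forall>q\<in>F. Dsum k e ?w (?w e) q0 \<le> Dsum k e ?w (?w e) q"
    using continuous_attains_inf[OF ctrl_facts(3,4)[OF ac] cD] by blast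
  define \<delta> where "\<delta> = Dsum k e ?w (?w e) q0"
  have dpos: "0 < \<delta>" using pos q0 by (simp add: \<delta>_def)
  have kpos: "0 < k e" using stencil_mem[OF sm ak e q0(1)] by simp
  have mem: "e - k e *\<^sub>R column j (fst q0) \<in> mesh_union T" "e + k e *\<^sub>R column j (fst q0) \<in> mesh_union T" for j
    using stencil_mem[OF sm ak e q0(1)] by auto
  have "Dsum k e (ext T u) (u e) q0 + M * (k e)\<^sup>2 \<le> Dsum k e (\<lambda>y. - ?w y) (- ?w e) q0"
  proof (rule Dsum_compare[OF ac q0(1)])
    fix j
    let ?a = "e - k e *\<^sub>R column j (fst q0)" and ?b = "e + k e *\<^sub>R column j (fst q0)"
    have "M * (norm (k e *\<^sub>R column j (fst q0)))\<^sup>2 \<le> ?I ?a - 2 * ?I e + ?I ?b"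
      using Ih_stencil[OF sm M en mem(1)[of j] mem(2)[of j]] by simp
    then have "M * (k e)\<^sup>2 * (norm (column j (fst q0)))\<^sup>2 \<le> ?I ?a - 2 * ?I e + ?I ?b"
      by (simp only: norm_kcol mult.assoc)
    then show "ext T u ?a - 2 * u e + ext T u ?b + M * (k e)\<^sup>2 * (norm (column j (fst q0)))\<^sup>2
        \<le> - ?w ?a - 2 * - ?w e + - ?w ?b"
      using ext_in[OF mem(1)[of j]] ext_in[OF mem(2)[of j]] by simp
  qed
  moreover have "Dsum k e (\<lambda>y. - ?w y) (- ?w e) q0 = - \<delta>"
    unfolding \<delta>_def Dsum_def by (simp add: sum_negf[symmetric] algebra_simps)
  moreover have "0 \<le> M * (k e)\<^sup>2" using M by simp
  ultimately have "\<delta> \<le> - Dsum k e (ext T u) (u e) q0" by linarith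
  then have "\<delta> / (k e)\<^sup>2 \<le> (- Dsum k e (ext T u) (u e) q0) / (k e)\<^sup>2"
    using kpos by (intro divide_right_mono) auto
  moreover have "0 \<le> f e * root CARD('n) (det (ctrl_map q0))"
    using fe ctrl_det_nonneg[OF ac q0(1)] by (simp add: real_root_ge_zero)
  ultimately have "\<delta> / (k e)\<^sup>2 \<le> Lh F f g T k (ctrl_map q0) (u e) (ext T u) e"
    unfolding Lh_Dsum[OF ac q0(1) e] by simp
  also have "\<dots> \<le> 0" using Lh_le_Hh[OF ac sm ak e u q0(1), of f g] H0 by simp
  finally have "\<delta> / (k e)\<^sup>2 \<le> 0" .
  moreover have "0 < \<delta> / (k e)\<^sup>2" using dpos kpos by simp
  ultimately show False by linarith
qed



lemma bnodes_nodes: "bnodes T \<subseteq> nodes T" by (auto simp: bnodes_def)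

lemma node_cases: "x \<in> nodes T \<Longrightarrow> x \<notin> inodes T \<Longrightarrow> x \<in> bnodes T"
  by (auto simp: inodes_def)

lemma bnode_val:
  fixes F :: "((real^'n::finite^'n) \<times> (real^'n^'n)) set"
  assumes sol: "discrete_solution F f g T k u" and z: "z \<in> bnodes T"
  shows "u z = g z"
proof -
  have zn: "z \<in> nodes T" "z \<notin> inodes T" using z by (auto simp: bnodes_def inodes_def)
  have "0 = Hh F f g T k (u z) (ext T u) z" using sol_facts(2)[OF sol zn(1)] by simp
  also have "\<dots> = u z - g z" unfolding Hh_def Lh_def using zn(2) by (simp add: cSUP_const[OF S1_ne])
  finally show ?thesis by simp
qed

lemma ext_val:
  assumes sm: "simplicial_mesh T"
  shows "\<exists>y\<in>mesh_union T. ext T h x = h y"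
proof (cases "x \<in> mesh_union T")
  case True then show ?thesis by (auto simp: ext_def)
next
  case False
  have cl: "closed (mesh_union T)" using compact_mesh_union[OF sm] by (rule compact_imp_closed)
  have ne: "mesh_union T \<noteq> {}" using nodes_ne[OF sm] nodes_sub_mesh_union by blast
  obtain y where "y \<in> mesh_union T" "infdist x (mesh_union T) = dist x y"
    using infdist_attains_inf[OF cl ne] by blast
  then have ex: "\<exists>y. y \<in> mesh_union T \<and> dist x y = infdist x (mesh_union T)" by auto
  let ?y = "SOME y. y \<in> mesh_union T \<and> dist x y = infdist x (mesh_union T)"
  have "?y \<in> mesh_union T" using someI_ex[OF ex] by blast
  moreover have "ext T h x = h ?y" using False by (simp add: ext_def)
  ultimately show ?thesis by blast
qed

lemma core:
  fixes \<Omega> :: "(real^'n::finite) set" and f g :: "real^'n \<Rightarrow> real"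
    and F :: "((real^'n^'n) \<times> (real^'n^'n)) set" and c \<kappa> :: real and p :: "real^'n"
  assumes ne: "\<Omega> \<noteq> {}" and fb: "bounded (f ` \<Omega>)" and fnn: "\<forall>x\<in>\<Omega>. 0 \<le> f x"
    and ac: "admissible_controls F c" and am: "admissible_mesh \<Omega> \<kappa> T" and ak: "admissible_k F T k"
    and sol: "discrete_solution F f g T k u"
    and M: "M \<ge> (SUP x\<in>\<Omega>. f x) * (SUP B\<in>S1. root CARD('n) (det (B::real^'n^'n)))"
  shows "0 \<le> M"
    "\<exists>z\<in>bnodes T. \<forall>x\<in>mesh_union T. u z - Ih T (\<lambda>x. M / 2 * (norm (x - p))\<^sup>2) z \<le> u x - Ih T (\<lambda>x. M / 2 * (norm (x - p))\<^sup>2) x"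
    "\<exists>z\<in>bnodes T. \<forall>x\<in>mesh_union T. u x + Ih T (\<lambda>x. M / 2 * (norm (x - p))\<^sup>2) x \<le> u z + Ih T (\<lambda>x. M / 2 * (norm (x - p))\<^sup>2) z"
proof -
  have sm: "simplicial_mesh T" and Osub: "Omega_h T \<subseteq> \<Omega>" using am by (auto simp: admissible_mesh_def)
  let ?sf = "SUP x\<in>\<Omega>. f x"
  let ?sr = "SUP B\<in>(S1::(real^'n^'n) set). root CARD('n) (det B)"
  have bf: "bdd_above (f ` \<Omega>)" using fb by (rule bounded_imp_bdd_above)
  have fle: "f x \<le> ?sf" if "x \<in> \<Omega>" for x using bf that by (rule cSUP_upper2) simp
  have rdeq: "(\<lambda>B. root CARD('n) (det B)) ` (S1::(real^'n^'n) set) = (\<lambda>q. root CARD('n) (det (ctrl_map q))) ` F"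
    unfolding ctrl_facts(1)[OF ac] by (simp add: image_comp o_def)
  have "compact ((\<lambda>q. root CARD('n) (det (ctrl_map q))) ` F)"
    using compact_continuous_image[OF cont_rd ctrl_facts(3)[OF ac]] .
  then have br: "bdd_above ((\<lambda>B. root CARD('n) (det B)) ` (S1::(real^'n^'n) set))"
    unfolding rdeq by (intro bounded_imp_bdd_above compact_imp_bounded)
  have rle: "root CARD('n) (det (ctrl_map q)) \<le> ?sr" if "q \<in> F" for q
  proof -
    have cq: "ctrl_map q \<in> S1" using ctrl_facts(1)[OF ac] that by blast
    show ?thesis by (rule cSUP_upper2[OF br cq]) simp
  qed
  have r0: "0 \<le> root CARD('n) (det (ctrl_map q))" if "q \<in> F" for q
    using ctrl_det_nonneg[OF ac that] by simp
  obtain x0 where x0: "x0 \<in> \<Omega>" using ne by blast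
  obtain q0 where q0: "q0 \<in> F" using ctrl_facts(4)[OF ac] by blast
  have sf0: "0 \<le> ?sf" using fle[OF x0] fnn x0 by fastforce
  have sr0: "0 \<le> ?sr" using rle[OF q0] r0[OF q0] by linarith
  show M0: "0 \<le> M" using M sf0 sr0 by (meson mult_nonneg_nonneg order_trans)
  have fM: "\<forall>q\<in>F. f e * root CARD('n) (det (ctrl_map q)) \<le> M" if e: "e \<in> inodes T" for e
  proof
    fix q assume q: "q \<in> F"
    have eO: "e \<in> \<Omega>" using inodes_in_Omega_h[OF sm e] Osub by blast
    have "f e * root CARD('n) (det (ctrl_map q)) \<le> ?sf * ?sr"
      using fle[OF eO] rle[OF q] r0[OF q] sf0 fnn eO by (intro mult_mono) auto
    then show "f e * root CARD('n) (det (ctrl_map q)) \<le> M" using M by linarith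
  qed
  have fe0: "0 \<le> f e" if "e \<in> inodes T" for e
    using inodes_in_Omega_h[OF sm that] Osub fnn by blast
  have u: "u \<in> Vh T" using sol by (simp add: discrete_solution_def)
  let ?I = "Ih T (\<lambda>x. M / 2 * (norm (x - p))\<^sup>2)"
  show "\<exists>z\<in>bnodes T. \<forall>x\<in>mesh_union T. u z - ?I z \<le> u x - ?I x"
  proof -
    let ?w = "\<lambda>y. u y - ?I y"
    have wV: "?w \<in> Vh T" using Vh_diff[OF u Ih_props(1)[OF sm]] .
    obtain e where e: "e \<in> nodes T" "\<forall>x\<in>mesh_union T. ?w e \<le> ?w x"
      "\<forall>a\<in>mesh_union T. \<forall>b\<in>mesh_union T. ?w a = ?w e \<longrightarrow> ?w b = ?w e \<longrightarrow> e = (1/2) *\<^sub>R (a + b) \<longrightarrow> a = b"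
      using extreme_node[OF sm wV] by blast
    have "e \<notin> inodes T"
    proof
      assume ei: "e \<in> inodes T"
      obtain q where q: "q \<in> F" "Dsum k e ?w (?w e) q \<le> 0"
        using min_case[OF ac sm ak sol ei M0 fM[OF ei], of p] by blast
      show False using interior_contra[OF ac sm ak ei e(2) e(3) q] .
    qed
    then show ?thesis using e node_cases by blast
  qed
  show "\<exists>z\<in>bnodes T. \<forall>x\<in>mesh_union T. u x + ?I x \<le> u z + ?I z"
  proof -
    let ?w = "\<lambda>y. - (u y + ?I y)"
    have wV: "?w \<in> Vh T" using Vh_neg[OF Vh_add[OF u Ih_props(1)[OF sm]]] .
    obtain e where e: "e \<in> nodes T" "\<forall>x\<in>mesh_union T. ?w e \<le> ?w x"
      "\<forall>a\<in>mesh_union T. \<forall>b\<in>mesh_union T. ?w a = ?w e \<longrightarrow> ?w b = ?w e \<longrightarrow> e = (1/2) *\<^sub>R (a + b) \<longrightarrow> a = b"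
      using extreme_node[OF sm wV] by blast
    have "e \<notin> inodes T"
    proof
      assume ei: "e \<in> inodes T"
      obtain q where q: "q \<in> F" "Dsum k e ?w (?w e) q \<le> 0"
        using max_case[OF ac sm ak sol ei M0 fe0[OF ei], of p] by blast
      show False using interior_contra[OF ac sm ak ei e(2) e(3) q] .
    qed
    moreover have "\<forall>x\<in>mesh_union T. u x + ?I x \<le> u e + ?I e" using e(2) by auto
    ultimately show ?thesis using e node_cases by blast
  qed
qed



theorem lemma6p2:
  fixes \<Omega> :: "(real^'n) set" and f g :: "real^'n \<Rightarrow> real"
    and F :: "((real^'n^'n) \<times> (real^'n^'n)) set" and c \<kappa> :: real
  assumes "CARD('n) \<ge> 2"
    and "open \<Omega>" "bounded \<Omega>" "\<Omega> \<noteq> {}" "strictly_convex_domain \<Omega>"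
    and "continuous_on \<Omega> f" "bounded (f ` \<Omega>)" "\<forall>x\<in>\<Omega>. 0 \<le> f x"
    and "continuous_on (frontier \<Omega>) g" "bounded (g ` frontier \<Omega>)"
    and "admissible_controls F c"
  shows "(\<exists>C>0. \<forall>T k u. admissible_mesh \<Omega> \<kappa> T \<and> admissible_k F T k \<and>
              discrete_solution F f g T k u \<longrightarrow>
              (\<forall>x\<in>closure \<Omega>. \<bar>ext T u x\<bar> \<le> C))
       \<and> (\<forall>T k u (p::real^'n) M. admissible_mesh \<Omega> \<kappa> T \<and> admissible_k F T k \<and>
              discrete_solution F f g T k u \<and>
              M \<ge> (SUP x\<in>\<Omega>. f x) * (SUP B\<in>S1. root CARD('n) (det (B::real^'n^'n))) \<longrightarrow>
              (let \<zeta> = (\<lambda>x. M / 2 * (norm (x - p))\<^sup>2) in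
                 (\<exists>z\<in>bnodes T. \<forall>x\<in>closure \<Omega>.
                     ext T (\<lambda>y. u y - Ih T \<zeta> y) z \<le> ext T (\<lambda>y. u y - Ih T \<zeta> y) x) \<and>
                 (\<exists>z\<in>bnodes T. \<forall>x\<in>closure \<Omega>.
                     ext T (\<lambda>y. u y + Ih T \<zeta> y) x \<le> ext T (\<lambda>y. u y + Ih T \<zeta> y) z)))"
proof -
  note ne = assms(4) and fb = assms(7) and fnn = assms(8) and gb = assms(10) and ac = assms(11)
  have P2: "\<forall>T k u (p::real^'n) M. admissible_mesh \<Omega> \<kappa> T \<and> admissible_k F T k \<and>
              discrete_solution F f g T k u \<and>
              M \<ge> (SUP x\<in>\<Omega>. f x) * (SUP B\<in>S1. root CARD('n) (det (B::real^'n^'n))) \<longrightarrow>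
              (let \<zeta> = (\<lambda>x. M / 2 * (norm (x - p))\<^sup>2) in
                 (\<exists>z\<in>bnodes T. \<forall>x\<in>closure \<Omega>.
                     ext T (\<lambda>y. u y - Ih T \<zeta> y) z \<le> ext T (\<lambda>y. u y - Ih T \<zeta> y) x) \<and>
                 (\<exists>z\<in>bnodes T. \<forall>x\<in>closure \<Omega>.
                     ext T (\<lambda>y. u y + Ih T \<zeta> y) x \<le> ext T (\<lambda>y. u y + Ih T \<zeta> y) z))"
  proof (intro allI impI)
    fix T k u and p :: "real^'n" and M :: real
    assume H: "admissible_mesh \<Omega> \<kappa> T \<and> admissible_k F T k \<and> discrete_solution F f g T k u \<and>
              M \<ge> (SUP x\<in>\<Omega>. f x) * (SUP B\<in>S1. root CARD('n) (det (B::real^'n^'n)))"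
    then have am: "admissible_mesh \<Omega> \<kappa> T" and ak: "admissible_k F T k" and sol: "discrete_solution F f g T k u"
      and Mg: "M \<ge> (SUP x\<in>\<Omega>. f x) * (SUP B\<in>S1. root CARD('n) (det (B::real^'n^'n)))" by auto
    have sm: "simplicial_mesh T" using am by (simp add: admissible_mesh_def)
    let ?I = "Ih T (\<lambda>x. M / 2 * (norm (x - p))\<^sup>2)"
    obtain z1 where z1: "z1 \<in> bnodes T" "\<forall>x\<in>mesh_union T. u z1 - ?I z1 \<le> u x - ?I x"
      using core(2)[OF ne fb fnn ac am ak sol Mg, of p] by blast
    obtain z2 where z2: "z2 \<in> bnodes T" "\<forall>x\<in>mesh_union T. u x + ?I x \<le> u z2 + ?I z2"
      using core(3)[OF ne fb fnn ac am ak sol Mg, of p] by blast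
    have zm: "z1 \<in> mesh_union T" "z2 \<in> mesh_union T"
      using z1(1) z2(1) bnodes_nodes nodes_sub_mesh_union by blast+
    have A: "\<forall>x\<in>closure \<Omega>. ext T (\<lambda>y. u y - ?I y) z1 \<le> ext T (\<lambda>y. u y - ?I y) x"
    proof
      fix x
      obtain y where "y \<in> mesh_union T" "ext T (\<lambda>y. u y - ?I y) x = u y - ?I y"
        using ext_val[OF sm] by blast
      then show "ext T (\<lambda>y. u y - ?I y) z1 \<le> ext T (\<lambda>y. u y - ?I y) x"
        using z1(2) ext_in[OF zm(1)] by simp
    qed
    have B: "\<forall>x\<in>closure \<Omega>. ext T (\<lambda>y. u y + ?I y) x \<le> ext T (\<lambda>y. u y + ?I y) z2"
    proof
      fix x
      obtain y where "y \<in> mesh_union T" "ext T (\<lambda>y. u y + ?I y) x = u y + ?I y"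
        using ext_val[OF sm] by blast
      then show "ext T (\<lambda>y. u y + ?I y) x \<le> ext T (\<lambda>y. u y + ?I y) z2"
        using z2(2) ext_in[OF zm(2)] by simp
    qed
    show "let \<zeta> = (\<lambda>x. M / 2 * (norm (x - p))\<^sup>2) in
                 (\<exists>z\<in>bnodes T. \<forall>x\<in>closure \<Omega>.
                     ext T (\<lambda>y. u y - Ih T \<zeta> y) z \<le> ext T (\<lambda>y. u y - Ih T \<zeta> y) x) \<and>
                 (\<exists>z\<in>bnodes T. \<forall>x\<in>closure \<Omega>.
                     ext T (\<lambda>y. u y + Ih T \<zeta> y) x \<le> ext T (\<lambda>y. u y + Ih T \<zeta> y) z)"
      unfolding Let_def using A B z1(1) z2(1) by blast
  qed
  define M0 where "M0 = \<bar>(SUP x\<in>\<Omega>. f x) * (SUP B\<in>S1. root CARD('n) (det (B::real^'n^'n)))\<bar>"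
  have M0g: "M0 \<ge> (SUP x\<in>\<Omega>. f x) * (SUP B\<in>S1. root CARD('n) (det (B::real^'n^'n)))"
    unfolding M0_def by simp
  have M00: "0 \<le> M0" unfolding M0_def by simp
  obtain R where R: "\<forall>x\<in>closure \<Omega>. norm x \<le> R"
    using bounded_closure[OF assms(3)] unfolding bounded_iff by blast
  obtain G where G: "\<forall>y\<in>g ` frontier \<Omega>. norm y \<le> G"
    using gb unfolding bounded_iff by blast
  define C where "C = \<bar>G\<bar> + M0 / 2 * R\<^sup>2 + 1"
  have Cpos: "0 < C" unfolding C_def using M00 by (simp add: add_nonneg_pos)
  have P1: "\<forall>T k u. admissible_mesh \<Omega> \<kappa> T \<and> admissible_k F T k \<and>
              discrete_solution F f g T k u \<longrightarrow>
              (\<forall>x\<in>closure \<Omega>. \<bar>ext T u x\<bar> \<le> C)"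
  proof (intro allI impI ballI)
    fix T k u x
    assume H: "admissible_mesh \<Omega> \<kappa> T \<and> admissible_k F T k \<and> discrete_solution F f g T k u"
    then have am: "admissible_mesh \<Omega> \<kappa> T" and ak: "admissible_k F T k" and sol: "discrete_solution F f g T k u"
      by auto
    have sm: "simplicial_mesh T" and bfr: "bnodes T \<subseteq> frontier \<Omega>" using am by (auto simp: admissible_mesh_def)
    let ?z = "\<lambda>x. M0 / 2 * (norm (x - 0))\<^sup>2"
    let ?I = "Ih T ?z"
    obtain z1 where z1: "z1 \<in> bnodes T" "\<forall>x\<in>mesh_union T. u z1 - ?I z1 \<le> u x - ?I x"
      using core(2)[OF ne fb fnn ac am ak sol M0g, of 0] by blast
    obtain z2 where z2: "z2 \<in> bnodes T" "\<forall>x\<in>mesh_union T. u x + ?I x \<le> u z2 + ?I z2"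
      using core(3)[OF ne fb fnn ac am ak sol M0g, of 0] by blast
    obtain y where y: "y \<in> mesh_union T" "ext T u x = u y" using ext_val[OF sm] by blast
    have zb: "\<bar>u z\<bar> \<le> \<bar>G\<bar>" "?I z = ?z z" "?z z \<le> M0 / 2 * R\<^sup>2" if z: "z \<in> bnodes T" for z
    proof -
      have zf: "z \<in> frontier \<Omega>" using z bfr by blast
      then have "\<bar>g z\<bar> \<le> G" using G by fastforce
      then show "\<bar>u z\<bar> \<le> \<bar>G\<bar>" using bnode_val[OF sol z] by simp
      show "?I z = ?z z" using Ih_props(2)[OF sm] z bnodes_nodes by blast
      have "norm z \<le> R" using R zf by (auto simp: frontier_def)
      then have "(norm z)\<^sup>2 \<le> R\<^sup>2" by (simp add: power_mono)
      then show "?z z \<le> M0 / 2 * R\<^sup>2" using M00 by (simp add: mult_left_mono)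
    qed
    have Iy: "0 \<le> ?I y"
    proof -
      have "0 \<le> M0 / 2 * (norm (y - 0))\<^sup>2" using M00 by simp
      then show ?thesis using Ih_ge[OF sm M00 y(1), of 0] by linarith
    qed
    have "u y \<le> \<bar>G\<bar> + M0 / 2 * R\<^sup>2"
      using z2(2) y(1) zb[OF z2(1)] Iy by fastforce
    moreover have "- (\<bar>G\<bar> + M0 / 2 * R\<^sup>2) \<le> u y"
      using z1(2) y(1) zb[OF z1(1)] Iy by fastforce
    ultimately have "\<bar>u y\<bar> \<le> \<bar>G\<bar> + M0 / 2 * R\<^sup>2" by linarith
    then show "\<bar>ext T u x\<bar> \<le> C" using y(2) by (simp add: C_def)
  qed
  show ?thesis using P1 P2 Cpos by blast
qed

end
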